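(* Consider the 1D radiative transfer setting with $x\in(0,1)$, $v\in[-1,1]$, $\langle f\rangle=\frac12\int_{-1}^1f(x,v)\,\mathrm{d}v$, $\mathcal{L}f=\langle f\rangle-f$, Knudsen number $\mathsf{Kn}>0$, a background scattering coefficient $\sigma_{s0}(x)>0$ and absorption coefficient $\sigma_a\equiv0$. Given arbitrary inflow data $\phi_d$ and a boundary point $y\in\{0,1\}$, let $f_0$ solve $$v\,\partial_xf_0=\tfrac1{\mathsf{Kn}}\sigma_{s0}\mathcal{L}f_0-\mathsf{Kn}\,\sigma_af_0,\qquad f_0|_{\Gamma_-}=\phi_d,$$ and let $g$ solve $$-v\,\partial_xg=\tfrac1{\mathsf{Kn}}\sigma_{s0}\mathcal{L}g-\mathsf{Kn}\,\sigma_ag,\qquad g|_{\Gamma_+}=\delta_y(x),$$ and define $\gamma_{\mathsf{Kn}}(x;\delta_y,\phi_d)=\frac1{\mathsf{Kn}}\int g(x,v;\delta_y)\,\mathcal{L}f_0(x,v;\phi_d)\,\mathrm{d}v$. Then $\gamma_{\mathsf{Kn}}$ is a constant independent of $x$.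
   Context: $\Gamma_-=\{(0,v):v>0\}\cup\{(1,v):v<0\}$ and $\Gamma_+=\{(0,v):v<0\}\cup\{(1,v):v>0\}$ are the incoming and outgoing boundary sets. *)

theory Defs
  imports "HOL-Analysis.Analysis"
begin

definition Gamma_minus :: "(real \<times> real) set" where
  "Gamma_minus = {(0, v) | v. 0 < v \<and> v \<le> 1} \<union> {(1, v) | v. -1 \<le> v \<and> v < 0}"

definition Gamma_plus :: "(real \<times> real) set" where
  "Gamma_plus = {(0, v) | v. -1 \<le> v \<and> v < 0} \<union> {(1, v) | v. 0 < v \<and> v \<le> 1}"

definition vavg :: "(real \<Rightarrow> real \<Rightarrow> real) \<Rightarrow> real \<Rightarrow> real" where
  "vavg f x = (1/2) * integral {-1..1} (\<lambda>v. f x v)"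

definition Lop :: "(real \<Rightarrow> real \<Rightarrow> real) \<Rightarrow> real \<Rightarrow> real \<Rightarrow> real" where
  "Lop f x v = vavg f x - f x v"

text \<open>Classical (bounded) solution of
   s * v * d_x f = (1/Kn) sigma_s L f - Kn sigma_a f   on (0,1) x [-1,1],
  with s = 1 (forward equation) or s = -1 (adjoint equation).\<close>
definition rte_solution ::
  "real \<Rightarrow> real \<Rightarrow> (real \<Rightarrow> real) \<Rightarrow> (real \<Rightarrow> real) \<Rightarrow> (real \<Rightarrow> real \<Rightarrow> real) \<Rightarrow> bool" where
  "rte_solution s Kn sigs siga f \<longleftrightarrow>
     bounded ((\<lambda>(x, v). f x v) ` ({0..1} \<times> {-1..1})) \<and>
     (\<forall>x\<in>{0..1}. (\<lambda>v. f x v) integrable_on {-1..1}) \<and>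
     (\<forall>v\<in>{-1..1}. continuous_on {0..1} (\<lambda>x. f x v)) \<and>
     (\<forall>v\<in>{-1..1}. \<forall>x\<in>{0<..<1}.
        (\<lambda>x. f x v) differentiable (at x) \<and>
        s * v * deriv (\<lambda>x. f x v) x = (1 / Kn) * sigs x * Lop f x v - Kn * siga x * f x v)"

definition gammaKn :: "real \<Rightarrow> (real \<Rightarrow> real \<Rightarrow> real) \<Rightarrow> (real \<Rightarrow> real \<Rightarrow> real) \<Rightarrow> real \<Rightarrow> real" where
  "gammaKn Kn g f0 x = (1 / Kn) * integral {-1..1} (\<lambda>v. g x v * Lop f0 x v)"

end

theory Submission imports Defs begin

lemma lip_bound:
  fixes phi psi :: "real \<Rightarrow> real"
  assumes der: "\<forall>w\<in>{a<..<b}. (phi has_real_derivative psi w) (at w)"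
    and bnd: "\<forall>w\<in>{a<..<b}. \<bar>psi w\<bar> \<le> M"
    and w1: "w1 \<in> {a<..<b}" and w2: "w2 \<in> {a<..<b}"
  shows "\<bar>phi w2 - phi w1\<bar> \<le> M * \<bar>w2 - w1\<bar>"
proof -
  have key: "\<bar>phi y - phi x\<bar> \<le> M * \<bar>y - x\<bar>" if "x < y" "x \<in> {a<..<b}" "y \<in> {a<..<b}" for x y
  proof -
    have "\<forall>z. x \<le> z \<and> z \<le> y \<longrightarrow> DERIV phi z :> psi z" using der that by auto
    then obtain z where z: "x < z" "z < y" "phi y - phi x = (y - x) * psi z"
      using MVT2[OF \<open>x<y\<close>] by blast
    have "\<bar>psi z\<bar> \<le> M" using bnd z that by auto
    then show ?thesis using z(3) that(1) by (simp add: abs_mult mult.commute mult_right_mono)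
  qed
  show ?thesis
  proof (cases "w1 < w2")
    case True then show ?thesis using key w1 w2 by auto
  next
    case False
    show ?thesis
    proof (cases "w1 = w2")
      case True then show ?thesis by simp
    next
      case False
      then have "w2 < w1" using \<open>\<not> w1 < w2\<close> by auto
      then show ?thesis using key[of w2 w1] w1 w2 by (simp add: abs_minus_commute)
    qed
  qed
qed

lemma leibniz:
  fixes phi psi :: "real \<Rightarrow> real \<Rightarrow> real"
  assumes u: "a < u" "u < b"
    and der: "\<forall>w\<in>{a<..<b}. \<forall>v\<in>{-1..1}. ((\<lambda>w. phi w v) has_real_derivative psi w v) (at w)"
    and bnd: "\<forall>w\<in>{a<..<b}. \<forall>v\<in>{-1..1}. \<bar>psi w v\<bar> \<le> M"
    and int: "\<forall>w\<in>{a<..<b}. (phi w) integrable_on {-1..1}"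
  shows "((\<lambda>w. integral {-1..1} (phi w)) has_real_derivative integral {-1..1} (psi u)) (at u)"
proof -
  define e where "e = min (u - a) (b - u)"
  have e: "e > 0" using u by (simp add: e_def)
  let ?Q = "\<lambda>h. (integral {-1..1} (phi (u + h)) - integral {-1..1} (phi u)) / h"
  have "(?Q \<longlongrightarrow> integral {-1..1} (psi u)) (at 0 within ball 0 e)"
    unfolding tendsto_at_iff_sequentially
  proof (intro allI impI)
    fix X :: "nat \<Rightarrow> real"
    assume X: "\<forall>i. X i \<in> ball 0 e - {0}" and Xl: "X \<longlonglongrightarrow> 0"
    have Xin: "u + X k \<in> {a<..<b}" for k using X[rule_format, of k] by (auto simp: e_def dist_norm)
    have Xnz: "X k \<noteq> 0" for k using X by auto
    have uin: "u \<in> {a<..<b}" using u by auto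
    define q where "q k v = (phi (u + X k) v - phi u v) / X k" for k v
    have qint: "q k integrable_on {-1..1}" for k
      unfolding q_def using int Xin uin
      by (intro integrable_on_divide integrable_diff) auto
    have qbnd: "norm (q k v) \<le> M" if "v \<in> {-1..1}" for k v
    proof -
      have "\<bar>phi (u + X k) v - phi u v\<bar> \<le> M * \<bar>(u + X k) - u\<bar>"
        by (rule lip_bound[where psi="\<lambda>w. psi w v" and a=a and b=b]) (use der bnd that Xin uin in auto)
      then show ?thesis unfolding q_def using Xnz[of k] by (simp add: divide_le_eq abs_divide)
    qed
    have qconv: "(\<lambda>k. q k v) \<longlonglongrightarrow> psi u v" if "v \<in> {-1..1}" for v
    proof -
      have "((\<lambda>h. (phi (u + h) v - phi u v) / h) \<longlongrightarrow> psi u v) (at 0)"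
        using der uin that by (simp add: DERIV_def)
      then show ?thesis unfolding q_def using Xnz Xl
        unfolding tendsto_at_iff_sequentially by (auto simp: comp_def)
    qed
    have M: "(\<lambda>_. M) integrable_on {-1..(1::real)}" by (rule integrable_const_ivl)
    have lim: "(\<lambda>k. integral {-1..1} (q k)) \<longlonglongrightarrow> integral {-1..1} (psi u)"
      using dominated_convergence(2)[OF qint M qbnd qconv] by blast
    have "integral {-1..1} (q k) = ?Q (X k)" for k
      unfolding q_def using int Xin uin
      by (subst integral_divide) (auto simp: integral_diff)
    then show "(?Q \<circ> X) \<longlonglongrightarrow> integral {-1..1} (psi u)" using lim by (simp add: comp_def)
  qed
  moreover have "at (0::real) within ball 0 e = at 0" by (rule at_within_open) (use e in auto)
  ultimately have "(?Q \<longlongrightarrow> integral {-1..1} (psi u)) (at 0)" by simp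
  then show ?thesis by (simp add: DERIV_def)
qed
lemma prod_int:
  fixes F G :: "real \<Rightarrow> real"
  assumes "F integrable_on {-1..1}" "G integrable_on {-1..1}"
    "\<forall>v\<in>{-1..1}. \<bar>F v\<bar> \<le> M" "\<forall>v\<in>{-1..1}. \<bar>G v\<bar> \<le> M"
  shows "(\<lambda>v. F v * G v) integrable_on {-1..1}"
proof -
  have mF: "F \<in> borel_measurable (lebesgue_on {-1..1})" using assms(1) integrable_imp_measurable by blast
  have mG: "G \<in> borel_measurable (lebesgue_on {-1..1})" using assms(2) integrable_imp_measurable by blast
  have bF: "bounded (F ` {-1..1})" using assms(3) unfolding bounded_iff by (metis image_iff real_norm_def)
  have aG: "G absolutely_integrable_on {-1..1}"
    by (rule measurable_bounded_by_integrable_imp_absolutely_integrable[where g="\<lambda>_. M"]) (use mG assms(4) in auto)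
  have "(\<lambda>v. F v * G v) absolutely_integrable_on {-1..1}"
    by (rule absolutely_integrable_bounded_measurable_product_real) (use mF bF aG in auto)
  then show ?thesis using set_lebesgue_integral_eq_integral(1) by blast
qed

lemma prod_int2:
  fixes F G :: "real \<Rightarrow> real"
  assumes "F integrable_on {-1..1}" "G integrable_on {-1..1}"
    "\<forall>v\<in>{-1..1}. \<bar>F v\<bar> \<le> Ma" "\<forall>v\<in>{-1..1}. \<bar>G v\<bar> \<le> Mb"
  shows "(\<lambda>v. F v * G v) integrable_on {-1..1}"
  by (rule prod_int[where M="max Ma Mb"]) (use assms in \<open>auto simp: le_max_iff_disj\<close>)

definition tsol :: "real \<Rightarrow> (real \<Rightarrow> real \<Rightarrow> real) \<Rightarrow> real \<Rightarrow> real \<Rightarrow> real \<Rightarrow> bool" where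
  "tsol s F a b M \<longleftrightarrow> (\<forall>t\<in>{a<..<b}. \<forall>v\<in>{-1..1}. \<bar>F t v\<bar> \<le> M) \<and>
     (\<forall>t\<in>{a<..<b}. (F t) integrable_on {-1..1}) \<and>
     (\<forall>t\<in>{a<..<b}. \<forall>v\<in>{-1..1}. ((\<lambda>t. v * F t v) has_real_derivative s * Lop F t v) (at t))"

lemma tsol_mono: "tsol s F a b M \<Longrightarrow> a \<le> a' \<Longrightarrow> b' \<le> b \<Longrightarrow> tsol s F a' b' M"
  unfolding tsol_def by auto

lemma tsol_shift: assumes "tsol s F a b M" shows "tsol s (\<lambda>t. F (t + u)) (a - u) (b - u) M"
proof -
  have L: "Lop (\<lambda>t. F (t + u)) t v = Lop F (t + u) v" for t v by (simp add: Lop_def vavg_def)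
  have d: "((\<lambda>t. v * F (t + u) v) has_real_derivative s * Lop F (t + u) v) (at t)"
    if "t \<in> {a - u<..<b - u}" "v \<in> {-1..1}" for t v
  proof -
    have "((\<lambda>t. v * F t v) has_real_derivative s * Lop F (t + u) v) (at (t + u))"
      using assms that unfolding tsol_def by auto
    then show ?thesis using DERIV_shift[of "\<lambda>t. v * F t v"] by simp
  qed
  show ?thesis using assms d unfolding tsol_def L by auto
qed

lemma vavg_bound: assumes "(F t) integrable_on {-1..1}" "\<forall>v\<in>{-1..1}. \<bar>F t v\<bar> \<le> M"
  shows "\<bar>vavg F t\<bar> \<le> M"
proof -
  have c: "(\<lambda>_. c) integrable_on {-1..(1::real)}" for c :: real by (rule integrable_const_ivl)
  have "integral {-1..1} (F t) \<le> integral {-1..1} (\<lambda>_::real. M)"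
    by (rule integral_le[OF assms(1) c]) (use assms in \<open>auto simp: abs_le_iff\<close>)
  moreover have "integral {-1..1} (\<lambda>_::real. -M) \<le> integral {-1..1} (F t)"
  proof (rule integral_le[OF c assms(1)])
    fix x :: real assume "x \<in> {-1..1}"
    then have "\<bar>F t x\<bar> \<le> M" using assms(2) by blast
    then show "- M \<le> F t x" by linarith
  qed
  ultimately show ?thesis unfolding vavg_def by (simp add: abs_le_iff)
qed

lemma Lop_bound: assumes "(F t) integrable_on {-1..1}" "\<forall>v\<in>{-1..1}. \<bar>F t v\<bar> \<le> M" "v \<in> {-1..1}"
  shows "\<bar>Lop F t v\<bar> \<le> 2 * M"
proof -
  have "\<bar>vavg F t\<bar> \<le> M" using vavg_bound[of F t M, OF assms(1,2)] .
  moreover have "\<bar>F t v\<bar> \<le> M" using assms(2,3) by auto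
  ultimately show ?thesis unfolding Lop_def by linarith
qed

lemma Lop_zero:
  assumes "((\<lambda>t. 0 * F t 0) has_real_derivative s * Lop F t 0) (at t)" "s \<noteq> 0"
  shows "Lop F t 0 = 0"
proof -
  have "((\<lambda>t. 0 * F t 0) has_real_derivative 0) (at t)" by simp
  then have "s * Lop F t 0 = 0" using DERIV_unique assms(1) by blast
  then show ?thesis using assms(2) by simp
qed

lemma W_deriv:
  assumes F: "tsol 1 F a b M" and G: "tsol (-1) G a b M" and t: "t \<in> {a<..<b}"
  shows "((\<lambda>t. integral {-1..1} (\<lambda>v. v * G t v * F t v)) has_real_derivative 0) (at t)"
proof -
  define psi where "psi w v = - Lop G w v * F w v + G w v * Lop F w v" for w v
  have der: "((\<lambda>w. v * G w v * F w v) has_real_derivative psi w v) (at w)"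
    if w: "w \<in> {a<..<b}" and v: "v \<in> {-1..1}" for w v
  proof (cases "v = 0")
    case True
    have z: "(0::real) \<in> {-1..1}" by simp
    have dF: "\<forall>t\<in>{a<..<b}. \<forall>v\<in>{-1..1}. ((\<lambda>t. v * F t v) has_real_derivative 1 * Lop F t v) (at t)"
      using F unfolding tsol_def by blast
    have dG: "\<forall>t\<in>{a<..<b}. \<forall>v\<in>{-1..1}. ((\<lambda>t. v * G t v) has_real_derivative (-1) * Lop G t v) (at t)"
      using G unfolding tsol_def by blast
    have "Lop F w 0 = 0" by (rule Lop_zero[OF dF[rule_format, OF w z]]) simp
    moreover have "Lop G w 0 = 0" by (rule Lop_zero[OF dG[rule_format, OF w z]]) simp
    ultimately show ?thesis using True by (simp add: psi_def)
  next
    case False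
    have dG: "((\<lambda>w. v * G w v) has_real_derivative - Lop G w v) (at w)"
      using G w v unfolding tsol_def by auto
    have dF0: "((\<lambda>w. v * F w v) has_real_derivative Lop F w v) (at w)"
      using F w v unfolding tsol_def by auto
    have dF: "((\<lambda>w. F w v) has_real_derivative Lop F w v / v) (at w)"
      using DERIV_cmult[OF dF0, of "1/v"] False by simp
    have D: "((\<lambda>w. (v * G w v) * F w v) has_real_derivative
       (- Lop G w v) * F w v + (Lop F w v / v) * (v * G w v)) (at w)"
      by (rule DERIV_mult[OF dG dF])
    have "(- Lop G w v) * F w v + (Lop F w v / v) * (v * G w v) = psi w v"
      using False by (simp add: psi_def)
    then show ?thesis using D by (simp add: mult.assoc)
  qed
  have "\<bar>F t 0\<bar> \<le> M" using F t unfolding tsol_def by auto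
  then have Mnn: "M \<ge> 0" by linarith
  have bnd: "\<bar>psi w v\<bar> \<le> 4 * M * M" if w: "w \<in> {a<..<b}" and v: "v \<in> {-1..1}" for w v
  proof -
    have b1: "\<bar>Lop G w v\<bar> \<le> 2 * M" by (rule Lop_bound) (use G w v in \<open>auto simp: tsol_def\<close>)
    have b2: "\<bar>Lop F w v\<bar> \<le> 2 * M" by (rule Lop_bound) (use F w v in \<open>auto simp: tsol_def\<close>)
    have b3: "\<bar>F w v\<bar> \<le> M" "\<bar>G w v\<bar> \<le> M" using F G w v unfolding tsol_def by auto
    have "\<bar>Lop G w v * F w v\<bar> \<le> 2 * M * M" unfolding abs_mult
      by (rule mult_mono) (use b1 b3 Mnn in auto)
    moreover have "\<bar>G w v * Lop F w v\<bar> \<le> M * (2 * M)" unfolding abs_mult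
      by (rule mult_mono) (use b2 b3 Mnn in auto)
    ultimately show ?thesis unfolding psi_def by linarith
  qed
  have int: "(\<lambda>v. v * G w v * F w v) integrable_on {-1..1}" if w: "w \<in> {a<..<b}" for w
  proof -
    have i1: "(\<lambda>v. v * G w v) integrable_on {-1..1}"
      by (rule prod_int2[where Ma=1 and Mb=M]) (use G w in \<open>auto simp: tsol_def intro: integrable_continuous_interval continuous_intros\<close>)
    have "\<forall>v\<in>{-1..1}. \<bar>v * G w v\<bar> \<le> M"
    proof
      fix v :: real assume v: "v \<in> {-1..1}"
      have "\<bar>v * G w v\<bar> \<le> 1 * M" unfolding abs_mult by (rule mult_mono) (use G w v Mnn in \<open>auto simp: tsol_def\<close>)
      then show "\<bar>v * G w v\<bar> \<le> M" by simp
    qed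
    then show ?thesis
      by (intro prod_int2[where Ma=M and Mb=M] i1) (use F w in \<open>auto simp: tsol_def\<close>)
  qed
  have D: "((\<lambda>t. integral {-1..1} (\<lambda>v. v * G t v * F t v)) has_real_derivative integral {-1..1} (psi t)) (at t)"
    by (rule leibniz[where a=a and b=b and M="4*M*M"]) (use t der bnd int in auto)
  have "integral {-1..1} (psi t) = integral {-1..1} (\<lambda>v. vavg F t * G t v - vavg G t * F t v)"
    by (rule integral_cong) (simp add: psi_def Lop_def algebra_simps)
  also have "\<dots> = vavg F t * integral {-1..1} (G t) - vavg G t * integral {-1..1} (F t)"
  proof -
    have iF: "(F t) integrable_on {-1..1}" and iG: "(G t) integrable_on {-1..1}" using F G t unfolding tsol_def by auto
    have "integral {-1..1} (\<lambda>v. vavg F t * G t v - vavg G t * F t v)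
        = integral {-1..1} (\<lambda>v. vavg F t * G t v) - integral {-1..1} (\<lambda>v. vavg G t * F t v)"
      by (rule integral_diff) (use integrable_on_mult_right[OF iF] integrable_on_mult_right[OF iG] in auto)
    also have "\<dots> = vavg F t * integral {-1..1} (G t) - vavg G t * integral {-1..1} (F t)"
      by simp
    finally show ?thesis .
  qed
  also have "\<dots> = 0" by (simp add: vavg_def)
  finally show ?thesis using D by simp
qed

lemma W_const:
  assumes F: "tsol 1 F a b M" and G: "tsol (-1) G a b M"
    and t1: "t1 \<in> {a<..<b}" and t2: "t2 \<in> {a<..<b}"
  shows "integral {-1..1} (\<lambda>v. v * G t1 v * F t1 v) = integral {-1..1} (\<lambda>v. v * G t2 v * F t2 v)"
proof -
  have "\<exists>c. \<forall>x\<in>{a<..<b}. integral {-1..1} (\<lambda>v. v * G x v * F x v) = c"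
  proof (rule has_field_derivative_zero_constant)
    fix x assume "x \<in> {a<..<b}"
    from W_deriv[OF F G this] show "((\<lambda>x. integral {-1..1} (\<lambda>v. v * G x v * F x v)) has_real_derivative 0) (at x within {a<..<b})"
      by (rule has_field_derivative_at_within)
  qed simp
  then show ?thesis using t1 t2 by metis
qed

lemma core:
  assumes F: "tsol 1 F 0 T M" and G: "tsol (-1) G 0 T M"
    and t: "t \<in> {0<..<T}" and t0: "t0 \<in> {0<..<T}"
  shows "integral {-1..1} (\<lambda>v. G t v * Lop F t v) = integral {-1..1} (\<lambda>v. G t0 v * Lop F t0 v)"
proof -
  define B where "B s u = integral {-1..1} (\<lambda>v. v * G s v * F (s + u) v)" for s u
  have "\<bar>F t 0\<bar> \<le> M" using F t unfolding tsol_def by auto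
  then have Mnn: "M \<ge> 0" by linarith
  have D: "((\<lambda>u. B s u) has_real_derivative integral {-1..1} (\<lambda>v. G s v * Lop F s v)) (at 0)"
    if s: "s \<in> {0<..<T}" for s
  proof -
    have "((\<lambda>u. integral {-1..1} (\<lambda>v. v * G s v * F (s + u) v)) has_real_derivative
        integral {-1..1} (\<lambda>v. G s v * Lop F (s + 0) v)) (at 0)"
    proof (rule leibniz[where a="-s" and b="T - s" and M="M * (2 * M)"])
      show "- s < 0" "0 < T - s" using s by auto
      show "\<forall>w\<in>{- s<..<T - s}. \<forall>v\<in>{- 1..1}. ((\<lambda>w. v * G s v * F (s + w) v) has_real_derivative G s v * Lop F (s + w) v) (at w)"
      proof (intro ballI)
        fix w v assume w: "w \<in> {- s<..<T - s}" and v: "v \<in> {-1..(1::real)}"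
        have "((\<lambda>x. v * F x v) has_real_derivative 1 * Lop F (w + s) v) (at (w + s))"
          using F w v unfolding tsol_def by auto
        then have "((\<lambda>w. v * F (w + s) v) has_real_derivative Lop F (w + s) v) (at w)"
          using DERIV_shift[of "\<lambda>x. v * F x v"] by simp
        then have "((\<lambda>w. G s v * (v * F (w + s) v)) has_real_derivative G s v * Lop F (w + s) v) (at w)"
          by (rule DERIV_cmult)
        then show "((\<lambda>w. v * G s v * F (s + w) v) has_real_derivative G s v * Lop F (s + w) v) (at w)"
          by (simp add: add.commute mult.assoc mult.left_commute)
      qed
      show "\<forall>w\<in>{- s<..<T - s}. \<forall>v\<in>{- 1..1}. \<bar>G s v * Lop F (s + w) v\<bar> \<le> M * (2 * M)"
      proof (intro ballI)
        fix w v assume w: "w \<in> {- s<..<T - s}" and v: "v \<in> {-1..(1::real)}"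
        have sw: "s + w \<in> {0<..<T}" using w by auto
        have b1: "\<bar>Lop F (s + w) v\<bar> \<le> 2 * M" by (rule Lop_bound) (use F sw v in \<open>auto simp: tsol_def\<close>)
        have b2: "\<bar>G s v\<bar> \<le> M" using G s v unfolding tsol_def by auto
        show "\<bar>G s v * Lop F (s + w) v\<bar> \<le> M * (2 * M)" unfolding abs_mult
          by (rule mult_mono) (use b1 b2 Mnn in auto)
      qed
      show "\<forall>w\<in>{- s<..<T - s}. (\<lambda>v. v * G s v * F (s + w) v) integrable_on {- 1..1}"
      proof
        fix w assume w: "w \<in> {- s<..<T - s}"
        have sw: "s + w \<in> {0<..<T}" using w by auto
        have i1: "(\<lambda>v. v * G s v) integrable_on {-1..1}"
          by (rule prod_int2[where Ma=1 and Mb=M]) (use G s in \<open>auto simp: tsol_def intro: integrable_continuous_interval continuous_intros\<close>)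
        have "\<forall>v\<in>{-1..1}. \<bar>v * G s v\<bar> \<le> M"
        proof
          fix v :: real assume v: "v \<in> {-1..1}"
          have "\<bar>v * G s v\<bar> \<le> 1 * M" unfolding abs_mult by (rule mult_mono) (use G s v Mnn in \<open>auto simp: tsol_def\<close>)
          then show "\<bar>v * G s v\<bar> \<le> M" by simp
        qed
        then show "(\<lambda>v. v * G s v * F (s + w) v) integrable_on {- 1..1}"
          by (intro prod_int2[where Ma=M and Mb=M] i1) (use F sw in \<open>auto simp: tsol_def\<close>)
      qed
    qed
    then show ?thesis unfolding B_def by simp
  qed
  define e where "e = min (min t (T - t)) (min t0 (T - t0))"
  have e: "e > 0" using t t0 by (auto simp: e_def)
  have eq: "B t u = B t0 u" if u: "u \<in> ball 0 e" for u
  proof -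
    define a' where "a' = max 0 (- u)"
    define b' where "b' = min T (T - u)"
    have F': "tsol 1 (\<lambda>s. F (s + u)) a' b' M"
      by (rule tsol_mono[OF tsol_shift[OF F, of u]]) (auto simp: a'_def b'_def)
    have G': "tsol (-1) G a' b' M"
      by (rule tsol_mono[OF G]) (auto simp: a'_def b'_def)
    have "\<bar>u\<bar> < e" using u by (simp add: dist_norm)
    then have "t \<in> {a'<..<b'}" "t0 \<in> {a'<..<b'}" using t t0 by (auto simp: a'_def b'_def e_def)
    from W_const[OF F' G' this] show ?thesis unfolding B_def by simp
  qed
  have "((\<lambda>u. B t0 u) has_real_derivative integral {-1..1} (\<lambda>v. G t v * Lop F t v)) (at 0)"
    by (rule has_field_derivative_transform_within_open[OF D[OF t], where S="ball 0 e"])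
      (use e eq in auto)
  then show ?thesis using D[OF t0] DERIV_unique by blast
qed

lemma to_tsol:
  assumes sol: "rte_solution s Kn sigs siga f" and s: "s = 1 \<or> s = -1"
    and siga: "\<forall>x. siga x = 0" and Kn: "Kn > 0" and sp: "\<forall>x\<in>{0..1}. sigs x > 0"
    and bnd: "\<forall>x\<in>{0..1}. \<forall>v\<in>{-1..1}. \<bar>f x v\<bar> \<le> M"
    and X: "\<forall>t\<in>{0<..<T}. X t \<in> {0<..<1} \<and> (X has_real_derivative Kn / sigs (X t)) (at t)"
  shows "tsol s (\<lambda>t v. f (X t) v) 0 T M"
proof -
  have L: "Lop (\<lambda>t v. f (X t) v) t v = Lop f (X t) v" for t v by (simp add: Lop_def vavg_def)
  have d: "((\<lambda>t. v * f (X t) v) has_real_derivative s * Lop f (X t) v) (at t)"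
    if t: "t \<in> {0<..<T}" and v: "v \<in> {-1..1}" for t v
  proof -
    have x: "X t \<in> {0<..<1}" and dX: "(X has_real_derivative Kn / sigs (X t)) (at t)" using X t by auto
    have sx: "sigs (X t) > 0" using sp x by auto
    have "(\<lambda>x. f x v) differentiable (at (X t))" and eqn:
      "s * v * deriv (\<lambda>x. f x v) (X t) = (1 / Kn) * sigs (X t) * Lop f (X t) v - Kn * siga (X t) * f (X t) v"
      using sol x v unfolding rte_solution_def by auto
    then have df: "((\<lambda>x. f x v) has_real_derivative deriv (\<lambda>x. f x v) (X t)) (at (X t))"
      using DERIV_deriv_iff_real_differentiable by blast
    have dvf: "((\<lambda>x. v * f x v) has_real_derivative v * deriv (\<lambda>x. f x v) (X t)) (at (X t))"
      by (rule DERIV_cmult[OF df])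
    have "((\<lambda>t. v * f (X t) v) has_real_derivative v * deriv (\<lambda>x. f x v) (X t) * (Kn / sigs (X t))) (at t)"
      by (rule DERIV_chain2[OF dvf dX])
    moreover have "v * deriv (\<lambda>x. f x v) (X t) * (Kn / sigs (X t)) = s * Lop f (X t) v"
    proof -
      have ss: "s * s = 1" using s by auto
      have "v * deriv (\<lambda>x. f x v) (X t) = s * (s * v * deriv (\<lambda>x. f x v) (X t))"
        by (simp add: ss mult.assoc[symmetric])
      also have "\<dots> = s * ((1 / Kn) * sigs (X t) * Lop f (X t) v)" using eqn siga by simp
      finally show ?thesis using Kn sx by (simp add: field_simps)
    qed
    ultimately show ?thesis by simp
  qed
  have int: "\<forall>t\<in>{0<..<T}. (\<lambda>v. f (X t) v) integrable_on {-1..1}"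
    using sol X unfolding rte_solution_def by auto
  show ?thesis unfolding tsol_def L using d int bnd X by auto
qed

lemma rte_bound: assumes "rte_solution s Kn sigs siga f"
  shows "\<exists>M. \<forall>x\<in>{0..1}. \<forall>v\<in>{-1..1}. \<bar>f x v\<bar> \<le> M"
proof -
  have "bounded ((\<lambda>(x, v). f x v) ` ({0..1} \<times> {-1..1}))" using assms unfolding rte_solution_def by auto
  then obtain B where B: "\<forall>y\<in>(\<lambda>(x, v). f x v) ` ({0..1} \<times> {-1..1}). norm y \<le> B"
    unfolding bounded_iff by blast
  have "\<bar>f x v\<bar> \<le> B" if "x \<in> {0..1}" "v \<in> {-1..1}" for x v
    using B[rule_format, of "f x v"] that by force
  then show ?thesis by blast
qed

theorem proposition1:
  fixes Kn :: real and sigs siga :: "real \<Rightarrow> real"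
    and phid f0 g :: "real \<Rightarrow> real \<Rightarrow> real" and y :: real
  assumes Kn_pos: "Kn > 0"
    and sigs_pos: "\<forall>x\<in>{0..1}. sigs x > 0"
    and sigs_cont: "continuous_on {0..1} sigs"
    and siga_zero: "\<forall>x. siga x = 0"
    and y_bdry: "y \<in> {0, 1}"
    and f0_sol: "rte_solution 1 Kn sigs siga f0"
    and f0_bc: "\<forall>(x, v) \<in> Gamma_minus. f0 x v = phid x v"
    and g_sol: "rte_solution (-1) Kn sigs siga g"
    and g_bc: "\<forall>(x, v) \<in> Gamma_plus. g x v = (if x = y then 1 else 0)"
  shows "\<exists>c. \<forall>x\<in>{0<..<1}. gammaKn Kn g f0 x = c"
proof -
  obtain M1 where M1: "\<forall>x\<in>{0..1}. \<forall>v\<in>{-1..1}. \<bar>f0 x v\<bar> \<le> M1" using rte_bound[OF f0_sol] by blast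
  obtain M2 where M2: "\<forall>x\<in>{0..1}. \<forall>v\<in>{-1..1}. \<bar>g x v\<bar> \<le> M2" using rte_bound[OF g_sol] by blast
  define M where "M = max M1 M2"
  have bF: "\<forall>x\<in>{0..1}. \<forall>v\<in>{-1..1}. \<bar>f0 x v\<bar> \<le> M" using M1 unfolding M_def by fastforce
  have bG: "\<forall>x\<in>{0..1}. \<forall>v\<in>{-1..1}. \<bar>g x v\<bar> \<le> M" using M2 unfolding M_def by fastforce
  define tau where "tau x = integral {0..x} sigs / Kn" for x
  define T where "T = tau 1"
  have tau_cont: "continuous_on {0..1} tau"
    unfolding tau_def
    by (intro continuous_on_divide continuous_on_const indefinite_integral_continuous_1
        integrable_continuous_interval sigs_cont) (use Kn_pos in auto)
  have tau_der: "(tau has_real_derivative sigs x / Kn) (at x)" if x: "x \<in> {0<..<1}" for x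
  proof -
    have "((\<lambda>x. integral {0..x} sigs) has_real_derivative sigs x) (at x within {0..1})"
      by (rule integral_has_real_derivative[OF sigs_cont]) (use x in auto)
    then have "((\<lambda>x. integral {0..x} sigs) has_real_derivative sigs x) (at x within {0<..<1})"
      by (rule DERIV_subset) auto
    moreover have "at x within {0<..<1} = at x" by (rule at_within_open) (use x in auto)
    ultimately have "((\<lambda>x. integral {0..x} sigs) has_real_derivative sigs x) (at x)" by simp
    then show ?thesis unfolding tau_def by (rule DERIV_cdivide)
  qed
  have tau_mono: "tau x < tau z" if "0 \<le> x" "x < z" "z \<le> 1" for x z
  proof (rule DERIV_pos_imp_increasing_open[OF \<open>x < z\<close>])
    fix w assume "x < w" "w < z"
    then have w: "w \<in> {0<..<1}" using that by auto
    then show "\<exists>y. (tau has_real_derivative y) (at w) \<and> 0 < y"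
      using tau_der[OF w] sigs_pos Kn_pos by (intro exI[of _ "sigs w / Kn"]) auto
  next
    show "continuous_on {x..z} tau" by (rule continuous_on_subset[OF tau_cont]) (use that in auto)
  qed
  have tau0: "tau 0 = 0" unfolding tau_def by simp
  have Tpos: "T > 0" using tau_mono[of 0 1] tau0 unfolding T_def by simp
  have inj: "inj_on tau {0..1}"
  proof (rule inj_onI)
    fix x z assume "x \<in> {0..1}" "z \<in> {0..1}" "tau x = tau z"
    then show "x = z" using tau_mono[of x z] tau_mono[of z x] by (cases "x < z"; cases "z < x") auto
  qed
  have img: "tau ` {0..1} = {0..T}"
  proof
    show "tau ` {0..1} \<subseteq> {0..T}"
    proof
      fix t assume "t \<in> tau ` {0..1}"
      then obtain x where x: "x \<in> {0..1}" "t = tau x" by auto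
      have "tau 0 \<le> tau x" using tau_mono[of 0 x] x by (cases "x = 0") auto
      moreover have "tau x \<le> tau 1" using tau_mono[of x 1] x by (cases "x = 1") auto
      ultimately show "t \<in> {0..T}" using x tau0 unfolding T_def by auto
    qed
  next
    show "{0..T} \<subseteq> tau ` {0..1}"
    proof
      fix t assume t: "t \<in> {0..T}"
      obtain x where "0 \<le> x" "x \<le> 1" "tau x = t"
        using IVT'[of tau 0 t 1, OF _ _ _ tau_cont] t tau0 unfolding T_def by auto
      then show "t \<in> tau ` {0..1}" by auto
    qed
  qed
  define X where "X = inv_into {0..1} tau"
  have Xtau: "X (tau x) = x" if "x \<in> {0..1}" for x using inv_into_f_f[OF inj that] unfolding X_def .
  have tauX: "tau (X t) = t" if "t \<in> {0..T}" for t
    using f_inv_into_f[of t tau "{0..1}"] that img unfolding X_def by auto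
  have Xin: "X t \<in> {0..1}" if "t \<in> {0..T}" for t
    using inv_into_into[of t tau "{0..1}"] that img unfolding X_def by auto
  have Xcont: "continuous_on {0..T} X"
    using continuous_on_inv[OF tau_cont compact_Icc, of X] Xtau img by auto
  have Xprop: "\<forall>t\<in>{0<..<T}. X t \<in> {0<..<1} \<and> (X has_real_derivative Kn / sigs (X t)) (at t)"
  proof
    fix t assume t: "t \<in> {0<..<T}"
    have x01: "X t \<in> {0..1}" using Xin t by auto
    have "X t \<noteq> 0" using tauX[of t] t tau0 by auto
    moreover have "X t \<noteq> 1" using tauX[of t] t unfolding T_def by auto
    ultimately have x: "X t \<in> {0<..<1}" using x01 by auto
    have sx: "sigs (X t) > 0" using sigs_pos x01 by auto
    have "isCont X t"
      by (rule continuous_on_interior[OF Xcont]) (use t in auto)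
    then have "(X has_real_derivative inverse (sigs (X t) / Kn)) (at t)"
      by (intro DERIV_inverse_function[where f=tau and a=0 and b=T] tau_der x)
        (use sx Kn_pos t tauX in auto)
    then show "X t \<in> {0<..<1} \<and> (X has_real_derivative Kn / sigs (X t)) (at t)"
      using x by simp
  qed
  have FT: "tsol 1 (\<lambda>t v. f0 (X t) v) 0 T M"
    by (rule to_tsol[OF f0_sol _ siga_zero Kn_pos sigs_pos bF Xprop]) simp
  have GT: "tsol (-1) (\<lambda>t v. g (X t) v) 0 T M"
    by (rule to_tsol[OF g_sol _ siga_zero Kn_pos sigs_pos bG Xprop]) simp
  define t0 where "t0 = T / 2"
  have t0: "t0 \<in> {0<..<T}" using Tpos unfolding t0_def by auto
  have L: "Lop (\<lambda>t v. f0 (X t) v) t v = Lop f0 (X t) v" for t v by (simp add: Lop_def vavg_def)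
  show ?thesis
  proof (intro exI ballI)
    fix x :: real assume x: "x \<in> {0<..<1}"
    have tx: "tau x \<in> {0<..<T}"
      using tau_mono[of 0 x] tau_mono[of x 1] x tau0 unfolding T_def by auto
    have "gammaKn Kn g f0 x = (1 / Kn) * integral {-1..1} (\<lambda>v. g (X (tau x)) v * Lop (\<lambda>t v. f0 (X t) v) (tau x) v)"
      unfolding gammaKn_def L using Xtau x by simp
    also have "\<dots> = (1 / Kn) * integral {-1..1} (\<lambda>v. g (X t0) v * Lop (\<lambda>t v. f0 (X t) v) t0 v)"
      using core[OF FT GT tx t0] by simp
    finally show "gammaKn Kn g f0 x = (1 / Kn) * integral {-1..1} (\<lambda>v. g (X t0) v * Lop (\<lambda>t v. f0 (X t) v) t0 v)" .
  qed
qed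
end
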